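(* Let $M\in\mathbb{R}^{n\times n}$ be a P-matrix. Then $M$ is a K-matrix if and only if for every $q\in\mathbb{R}^n$ such that $(M,q)$ is nondegenerate, the USO induced by $\mathrm{LCP}(M,q)$ is locally uniform.
   Context: For $v\in\{0,1\}^n$ and $I\subseteq[n]$, $v\oplus I$ flips the coordinates of $v$ in $I$; $v\oplus i=v\oplus\{i\}$. The $n$-cube has vertex set $\{0,1\}^n$ and edges $\{v,v\oplus i\}$; a unique-sink orientation (USO) is an orientation in which every subcube has exactly one sink. A P-matrix is a square real matrix with all principal minors positive; a K-matrix is a P-matrix whose off-diagonal entries are all non-positive. For $B\subseteq[n]$, $A_B$ is the matrix whose $i$th column is the $i$th column of $-M$ if $i\in B$ and of $I_n$ otherwise; $B(v)=\{j:v_j=1\}$. $(M,q)$ is nondegenerate if $(A_B^{-1}q)_i\ne0$ for all $B,i$; the USO induced by $\mathrm{LCP}(M,q)$ is given by $v\to v\oplus i$ iff $(A_{B(v)}^{-1}q)_i<0$. A USO is locally uniform if (i) whenever $u_i=u_j=0$ ($i\ne j$), $u\to u\oplus i$ and $u\to u\oplus j$, then $u\oplus i\to u\oplus\{i,j\}$ and $u\oplus j\to u\oplus\{i,j\}$; and (ii) whenever $u_i=u_j=0$, $u\oplus i\to u$ and $u\oplus j\to u$, then $u\oplus\{i,j\}\to u\oplus i$ and $u\oplus\{i,j\}\to u\oplus j$. *)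

theory Defs
  imports "Jordan_Normal_Form.DL_Rank_Submatrix" "Jordan_Normal_Form.Gauss_Jordan_Elimination"
          "Jordan_Normal_Form.Determinant"
begin

text \<open>Vertices of the n-cube {0,1}^n are represented by the sets B(v) = {j. v_j = 1},
  i.e. by subsets of {0..<n}; v xor I is symmetric difference.\<close>

definition cube_vertices :: "nat \<Rightarrow> nat set set" where
  "cube_vertices n = Pow {0..<n}"

definition flip :: "nat set \<Rightarrow> nat \<Rightarrow> nat set" where
  "flip v i = (if i \<in> v then v - {i} else insert i v)"

definition P_matrix :: "real mat \<Rightarrow> nat \<Rightarrow> bool" where
  "P_matrix M n \<longleftrightarrow> M \<in> carrier_mat n n \<and>
     (\<forall>S. S \<subseteq> {0..<n} \<and> S \<noteq> {} \<longrightarrow> det (submatrix M S S) > 0)"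

definition K_matrix :: "real mat \<Rightarrow> nat \<Rightarrow> bool" where
  "K_matrix M n \<longleftrightarrow> P_matrix M n \<and>
     (\<forall>i<n. \<forall>j<n. i \<noteq> j \<longrightarrow> M $$ (i, j) \<le> 0)"

definition A_mat :: "real mat \<Rightarrow> nat \<Rightarrow> nat set \<Rightarrow> real mat" where
  "A_mat M n B = mat n n (\<lambda>(i, j). if j \<in> B then - (M $$ (i, j)) else (1\<^sub>m n) $$ (i, j))"

definition mat_inv :: "real mat \<Rightarrow> real mat" where
  "mat_inv A = the (mat_inverse A)"

definition lcp_vec :: "real mat \<Rightarrow> nat \<Rightarrow> real vec \<Rightarrow> nat set \<Rightarrow> real vec" where
  "lcp_vec M n q B = mat_inv (A_mat M n B) *\<^sub>v q"

definition nondegenerate :: "real mat \<Rightarrow> nat \<Rightarrow> real vec \<Rightarrow> bool" where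
  "nondegenerate M n q \<longleftrightarrow>
     (\<forall>B. B \<subseteq> {0..<n} \<longrightarrow> (\<forall>i<n. lcp_vec M n q B $ i \<noteq> 0))"

definition lcp_arc :: "real mat \<Rightarrow> nat \<Rightarrow> real vec \<Rightarrow> nat set \<Rightarrow> nat \<Rightarrow> bool" where
  "lcp_arc M n q v i \<longleftrightarrow> lcp_vec M n q v $ i < 0"

text \<open>An orientation of the n-cube is given by arc v i meaning v \<rightarrow> flip v i.\<close>
definition locally_uniform :: "nat \<Rightarrow> (nat set \<Rightarrow> nat \<Rightarrow> bool) \<Rightarrow> bool" where
  "locally_uniform n arc \<longleftrightarrow>
     (\<forall>u \<in> cube_vertices n. \<forall>i<n. \<forall>j<n. i \<noteq> j \<and> i \<notin> u \<and> j \<notin> u \<longrightarrow>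
        ((arc u i \<and> arc u j) \<longrightarrow>
           (arc (flip u i) j \<and> arc (flip u j) i)) \<and>
        ((arc (flip u i) i \<and> arc (flip u j) j) \<longrightarrow>
           (arc (flip (flip u i) j) j \<and> arc (flip (flip u i) j) i)))"

end

theory Submission
  imports Defs "HOL-Computational_Algebra.Polynomial"
begin


lemma pick_image_mono:
  fixes f :: "nat \<Rightarrow> nat"
  assumes f: "strict_mono f" and t: "t < card S"
  shows "pick (f ` S) t = f (pick S t)"
proof -
  let ?x = "pick S t"
  have xS: "?x \<in> S" using pick_in_set_le[OF t] .
  have c: "card {a\<in>S. a < ?x} = t" using card_pick_le[OF t] .
  have "{a \<in> f ` S. a < f ?x} = f ` {a\<in>S. a < ?x}"
    using f by (auto simp: strict_mono_less)
  moreover have "card (f ` {a\<in>S. a < ?x}) = t"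
    using c card_image[of f] strict_mono_imp_inj_on[OF f] by (metis inj_on_subset subset_UNIV)
  ultimately have "card {a \<in> f ` S. a < f ?x} = t" by simp
  then show ?thesis using pick_card_in_set[of "f ?x" "f ` S"] xS by auto
qed

lemma strict_mono_insert_index: "strict_mono (insert_index l)"
  unfolding strict_mono_def insert_index_def by auto

lemma submatrix_full:
  assumes "M \<in> carrier_mat n n"
  shows "submatrix M {0..<n} {0..<n} = M"
proof -
  have c: "card {i. i < n \<and> i \<in> {0..<n}} = n" by simp
  have p: "pick {0..<n} i = i" if "i < n" for i
    using pick_card_in_set[of i "{0..<n}"] that
    by (metis (no_types, lifting) atLeastLessThan_iff card_lessThan lessThan_def
        mem_Collect_eq order_less_trans zero_le Collect_cong)
  show ?thesis
    apply (rule eq_matI)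
    using assms c p by (auto simp: submatrix_def)
qed

lemma det_A_mat:
  assumes "M \<in> carrier_mat n n" "B \<subseteq> {0..<n}"
  shows "det (A_mat M n B) = (-1)^card B * det (submatrix M B B)"
  using assms
proof (induction n arbitrary: M B)
  case 0
  then have "B = {}" by auto
  then show ?case using 0 by (simp add: A_mat_def submatrix_def det_def)
next
  case (Suc m)
  show ?case
  proof (cases "B = {0..<Suc m}")
    case True
    have "A_mat M (Suc m) B = (-1) \<cdot>\<^sub>m M"
      by (rule eq_matI, insert Suc.prems True, auto simp: A_mat_def)
    then show ?thesis using Suc.prems True submatrix_full[OF Suc.prems(1)] by simp
  next
    case False
    then obtain l where l: "l < Suc m" "l \<notin> B" using Suc.prems(2) by (meson atLeastLessThan_iff le0 subsetI subset_antisym)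
    define A where "A = A_mat M (Suc m) B"
    have A: "A \<in> carrier_mat (Suc m) (Suc m)" by (simp add: A_def A_mat_def)
    have "det A = (\<Sum>i<Suc m. A $$ (i,l) * cofactor A i l)"
      by (rule laplace_expansion_column[OF A l(1)])
    also have "\<dots> = (\<Sum>i<Suc m. if i = l then cofactor A l l else 0)"
      by (rule sum.cong, auto simp: A_def A_mat_def l)
    also have "\<dots> = det (mat_delete A l l)" using l by (simp add: cofactor_def)
    finally have d1: "det A = det (mat_delete A l l)" .
    define B' where "B' = {i. i < m \<and> insert_index l i \<in> B}"
    define M' where "M' = mat_delete M l l"
    have M': "M' \<in> carrier_mat m m" using Suc.prems by (simp add: M'_def mat_delete_def)
    have imgB: "insert_index l ` B' = B"
    proof
      show "insert_index l ` B' \<subseteq> B" by (auto simp: B'_def)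
      show "B \<subseteq> insert_index l ` B'"
      proof
        fix b assume b: "b \<in> B"
        then have "b \<noteq> l" using l by auto
        then have "insert_index l (delete_index l b) = b" by (rule insert_delete_index)
        moreover have "delete_index l b < m" using b Suc.prems l \<open>b \<noteq> l\<close>
          by (auto simp: delete_index_def)
        ultimately show "b \<in> insert_index l ` B'" using b unfolding B'_def
          by (metis (mono_tags, lifting) image_eqI mem_Collect_eq)
      qed
    qed
    have inj: "inj (insert_index l)" using strict_mono_imp_inj_on[OF strict_mono_insert_index] .
    have cardB: "card B' = card B" using imgB inj by (metis card_image inj_on_subset subset_UNIV)
    have B'sub: "B' \<subseteq> {0..<m}" by (auto simp: B'_def)
    have md: "mat_delete A l l = A_mat M' m B'"
    proof (rule eq_matI)
      fix i j assume ij: "i < dim_row (A_mat M' m B')" "j < dim_col (A_mat M' m B')"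
      then have ij: "i < m" "j < m" by (auto simp: A_mat_def)
      have jB: "(insert_index l j \<in> B) = (j \<in> B')" using ij by (auto simp: B'_def)
      have ii: "insert_index l i < Suc m" "insert_index l j < Suc m"
        using ij by (auto simp: insert_index_def)
      have eq: "(insert_index l i = insert_index l j) = (i = j)" using inj by (auto dest: injD)
      have e1: "mat_delete A l l $$ (i, j) = A $$ (insert_index l i, insert_index l j)"
        using mat_delete_index[OF A l(1) l(1) ij] by simp
      have e2: "M' $$ (i, j) = M $$ (insert_index l i, insert_index l j)"
        using mat_delete_index[OF Suc.prems(1) l(1) l(1) ij] by (simp add: M'_def)
      show "mat_delete A l l $$ (i, j) = A_mat M' m B' $$ (i, j)"
        unfolding e1 using ij ii jB eq e2
        by (simp add: A_def A_mat_def)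
    qed (auto simp: A_def A_mat_def mat_delete_def)
    have IH: "det (A_mat M' m B') = (-1)^card B' * det (submatrix M' B' B')"
      using Suc.IH[OF M' B'sub] .
    have fin: "finite B'" using B'sub finite_subset by blast
    have sub: "submatrix M' B' B' = submatrix M B B"
    proof (rule eq_matI)
      have d1: "card {i. i < m \<and> i \<in> B'} = card B'" using B'sub
        by (metis (no_types, lifting) Collect_cong Collect_mem_eq atLeastLessThan_iff subsetD)
      have d2: "card {i. i < Suc m \<and> i \<in> B} = card B" using Suc.prems
        by (metis (no_types, lifting) Collect_cong Collect_mem_eq atLeastLessThan_iff subsetD)
      show dr: "dim_row (submatrix M' B' B') = dim_row (submatrix M B B)"
        using d1 d2 cardB M' Suc.prems by (simp add: dim_submatrix)
      show dc: "dim_col (submatrix M' B' B') = dim_col (submatrix M B B)"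
        using d1 d2 cardB M' Suc.prems by (simp add: dim_submatrix)
      fix i j assume ij: "i < dim_row (submatrix M B B)" "j < dim_col (submatrix M B B)"
      then have ij': "i < card B'" "j < card B'" using d2 cardB Suc.prems by (auto simp: dim_submatrix)
      have pi: "pick B' i \<in> B'" "pick B' j \<in> B'" using pick_in_set_le ij' by auto
      then have pl: "pick B' i < m" "pick B' j < m" using B'sub by auto
      have "submatrix M' B' B' $$ (i,j) = M' $$ (pick B' i, pick B' j)"
        using ij' d1 M' by (intro submatrix_index) auto
      also have "\<dots> = M $$ (insert_index l (pick B' i), insert_index l (pick B' j))"
        using pl Suc.prems by (simp add: M'_def mat_delete_def insert_index_def)
      also have "\<dots> = M $$ (pick B i, pick B j)"
        using pick_image_mono[OF strict_mono_insert_index[of l] ij'(1)]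
          pick_image_mono[OF strict_mono_insert_index[of l] ij'(2)] imgB by simp
      also have "\<dots> = submatrix M B B $$ (i,j)"
        using ij' d2 cardB Suc.prems by (intro submatrix_index[symmetric]) auto
      finally show "submatrix M' B' B' $$ (i,j) = submatrix M B B $$ (i,j)" .
    qed
    show ?thesis using d1 md IH sub cardB by (simp add: A_def)
  qed
qed



lemma A_mat_carrier[simp]: "A_mat M n B \<in> carrier_mat n n"
  by (simp add: A_mat_def)

lemma A_mat_dim[simp]: "dim_row (A_mat M n B) = n" "dim_col (A_mat M n B) = n"
  by (simp_all add: A_mat_def)

lemma det_empty_sub: "det (submatrix M {} {}) = 1"
proof -
  have "submatrix M {} {} = 1\<^sub>m 0" by (rule eq_matI, auto simp: submatrix_def)
  then show ?thesis by simp
qed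

lemma sdet_pos:
  assumes P: "P_matrix M n" and B: "B \<subseteq> {0..<n}"
  shows "det (submatrix M B B) > 0"
  using P B det_empty_sub[of M] unfolding P_matrix_def by (cases "B = {}") auto

lemma detA_ne:
  assumes P: "P_matrix M n" and B: "B \<subseteq> {0..<n}"
  shows "det (A_mat M n B) \<noteq> 0"
proof -
  have M: "M \<in> carrier_mat n n" using P by (simp add: P_matrix_def)
  show ?thesis using det_A_mat[OF M B] sdet_pos[OF P B] by simp
qed

lemma A_inv:
  assumes P: "P_matrix M n" and B: "B \<subseteq> {0..<n}"
  shows "A_mat M n B * mat_inv (A_mat M n B) = 1\<^sub>m n \<and> mat_inv (A_mat M n B) * A_mat M n B = 1\<^sub>m n
      \<and> mat_inv (A_mat M n B) \<in> carrier_mat n n"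
proof -
  have U: "A_mat M n B \<in> Units (ring_mat TYPE(real) n ())"
    by (rule det_non_zero_imp_unit[OF A_mat_carrier detA_ne[OF P B]])
  have "mat_inverse (A_mat M n B) \<noteq> None"
    using mat_inverse(1)[OF A_mat_carrier, of M n B "()"] U by auto
  then obtain X where X: "mat_inverse (A_mat M n B) = Some X" by auto
  then show ?thesis using mat_inverse(2)[OF A_mat_carrier X] by (simp add: mat_inv_def)
qed

lemma lcp_sol:
  assumes P: "P_matrix M n" and B: "B \<subseteq> {0..<n}" and q: "q \<in> carrier_vec n"
  shows "lcp_vec M n q B \<in> carrier_vec n" "A_mat M n B *\<^sub>v lcp_vec M n q B = q"
proof -
  note I = A_inv[OF P B]
  show "lcp_vec M n q B \<in> carrier_vec n" using I q unfolding lcp_vec_def by (metis mult_mat_vec_carrier)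
  have "A_mat M n B *\<^sub>v lcp_vec M n q B = (A_mat M n B * mat_inv (A_mat M n B)) *\<^sub>v q"
    unfolding lcp_vec_def using I q by (metis assoc_mult_mat_vec A_mat_carrier)
  then show "A_mat M n B *\<^sub>v lcp_vec M n q B = q" using I q by simp
qed

lemma lcp_unique:
  assumes P: "P_matrix M n" and B: "B \<subseteq> {0..<n}" and z: "z \<in> carrier_vec n"
    and eq: "A_mat M n B *\<^sub>v z = q"
  shows "z = lcp_vec M n q B"
proof -
  note I = A_inv[OF P B]
  have "lcp_vec M n q B = mat_inv (A_mat M n B) *\<^sub>v (A_mat M n B *\<^sub>v z)"
    unfolding lcp_vec_def eq ..
  also have "\<dots> = (mat_inv (A_mat M n B) * A_mat M n B) *\<^sub>v z"
    using I z by (metis assoc_mult_mat_vec A_mat_carrier)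
  also have "\<dots> = z" using I z by simp
  finally show ?thesis by simp
qed

lemma colrep:
  assumes k: "k < n" "k \<notin> B" and y: "y \<in> carrier_vec n" and M: "M \<in> carrier_mat n n"
  shows "A_mat M n (insert k B) *\<^sub>v y =
    A_mat M n B *\<^sub>v (vec n (\<lambda>j. if j = k then 0 else y $ j)) + (y $ k) \<cdot>\<^sub>v (- col M k)"
proof (rule eq_vecI)
  fix r assume "r < dim_vec (A_mat M n B *\<^sub>v (vec n (\<lambda>j. if j = k then 0 else y $ j)) + (y $ k) \<cdot>\<^sub>v (- col M k))"
  then have r: "r < n" using M by (simp add: carrier_matD)
  have "(A_mat M n (insert k B) *\<^sub>v y) $ r = (\<Sum>j\<in>{0..<n}. A_mat M n (insert k B) $$ (r,j) * y $ j)"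
    using r y by (simp add: scalar_prod_def row_def)
  also have "\<dots> = (\<Sum>j\<in>{0..<n}. A_mat M n B $$ (r,j) * (if j = k then 0 else y $ j)
        + (if j = k then - M $$ (r,k) * y $ k else 0))"
    by (rule sum.cong, insert r k, auto simp: A_mat_def)
  also have "\<dots> = (\<Sum>j\<in>{0..<n}. A_mat M n B $$ (r,j) * (if j = k then 0 else y $ j))
        + (- M $$ (r,k) * y $ k)"
    using k by (simp add: sum.distrib)
  also have "\<dots> = (A_mat M n B *\<^sub>v (vec n (\<lambda>j. if j = k then 0 else y $ j)) + (y $ k) \<cdot>\<^sub>v (- col M k)) $ r"
    using r M k by (simp add: scalar_prod_def row_def carrier_matD)
  finally show "(A_mat M n (insert k B) *\<^sub>v y) $ r = (A_mat M n B *\<^sub>v (vec n (\<lambda>j. if j = k then 0 else y $ j)) + (y $ k) \<cdot>\<^sub>v (- col M k)) $ r" .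
qed (use M in \<open>simp add: carrier_matD\<close>)

lemma relation:
  assumes P: "P_matrix M n" and B: "B \<subseteq> {0..<n}" and k: "k < n" "k \<notin> B"
    and q: "q \<in> carrier_vec n"
  shows "lcp_vec M n q B $ k = lcp_vec M n q (insert k B) $ k * lcp_vec M n (- col M k) B $ k"
    "\<And>j. j < n \<Longrightarrow> j \<noteq> k \<Longrightarrow> lcp_vec M n q B $ j =
        lcp_vec M n q (insert k B) $ j + lcp_vec M n q (insert k B) $ k * lcp_vec M n (- col M k) B $ j"
proof -
  have M: "M \<in> carrier_mat n n" using P by (simp add: P_matrix_def)
  have Bk: "insert k B \<subseteq> {0..<n}" using B k by auto
  define y where "y = lcp_vec M n q (insert k B)"
  define a where "a = lcp_vec M n (- col M k) B"
  have mc: "- col M k \<in> carrier_vec n" using M k by simp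
  have y: "y \<in> carrier_vec n" "A_mat M n (insert k B) *\<^sub>v y = q"
    using lcp_sol[OF P Bk q] by (auto simp: y_def)
  have a: "a \<in> carrier_vec n" "A_mat M n B *\<^sub>v a = - col M k"
    using lcp_sol[OF P B mc] by (auto simp: a_def)
  define y' where "y' = vec n (\<lambda>j. if j = k then 0 else y $ j)"
  have y': "y' \<in> carrier_vec n" by (simp add: y'_def)
  define z where "z = y' + (y $ k) \<cdot>\<^sub>v a"
  have z: "z \<in> carrier_vec n" using y' a by (simp add: z_def)
  have "A_mat M n B *\<^sub>v z = A_mat M n B *\<^sub>v y' + (y $ k) \<cdot>\<^sub>v (A_mat M n B *\<^sub>v a)"
    unfolding z_def using y' a
    by (simp add: mult_add_distrib_mat_vec[OF A_mat_carrier] mult_mat_vec[OF A_mat_carrier])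
  also have "\<dots> = A_mat M n (insert k B) *\<^sub>v y"
    using colrep[OF k y(1) M] a by (simp add: y'_def)
  also have "\<dots> = q" using y by simp
  finally have "z = lcp_vec M n q B" using lcp_unique[OF P B z] by simp
  then have zx: "lcp_vec M n q B $ j = z $ j" if "j < n" for j using that by simp
  show "lcp_vec M n q B $ k = lcp_vec M n q (insert k B) $ k * lcp_vec M n (- col M k) B $ k"
    using zx[OF k(1)] k a by (simp add: z_def y'_def y_def a_def)
  show "\<And>j. j < n \<Longrightarrow> j \<noteq> k \<Longrightarrow> lcp_vec M n q B $ j =
        lcp_vec M n q (insert k B) $ j + lcp_vec M n q (insert k B) $ k * lcp_vec M n (- col M k) B $ j"
    using zx a by (simp add: z_def y'_def y_def a_def)
qed

lemma pivot_neg: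
  assumes P: "P_matrix M n" and B: "B \<subseteq> {0..<n}" and k: "k < n" "k \<notin> B"
  shows "lcp_vec M n (- col M k) B $ k < 0"
proof -
  have M: "M \<in> carrier_mat n n" using P by (simp add: P_matrix_def)
  have Bk: "insert k B \<subseteq> {0..<n}" using B k by auto
  define a where "a = lcp_vec M n (- col M k) B"
  have mc: "- col M k \<in> carrier_vec n" using M k by simp
  have a: "a \<in> carrier_vec n" "A_mat M n B *\<^sub>v a = - col M k"
    using lcp_sol[OF P B mc] by (auto simp: a_def)
  have rc: "replace_col (A_mat M n B) (- col M k) k = A_mat M n (insert k B)"
    by (rule eq_matI, insert M k, auto simp: replace_col_def A_mat_def)
  have "det (A_mat M n (insert k B)) = a $ k * det (A_mat M n B)"
    using cramer_lemma_mat[OF A_mat_carrier a(1) k(1), of M B] a rc by simp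
  moreover have "det (A_mat M n (insert k B)) = (-1)^(Suc (card B)) * det (submatrix M (insert k B) (insert k B))"
    using det_A_mat[OF M Bk] k B finite_subset[OF B] by simp
  moreover have "det (A_mat M n B) = (-1)^(card B) * det (submatrix M B B)"
    using det_A_mat[OF M B] .
  ultimately have "(-1::real)^card B * (- det (submatrix M (insert k B) (insert k B))) = (-1)^card B * (a $ k * det (submatrix M B B))"
    by (simp add: algebra_simps)
  then have "- det (submatrix M (insert k B) (insert k B)) = a $ k * det (submatrix M B B)"
    by (simp only: mult_cancel_left power_eq_0_iff) simp
  moreover have "det (submatrix M (insert k B) (insert k B)) > 0" using sdet_pos[OF P Bk] .
  moreover have "det (submatrix M B B) > 0" using sdet_pos[OF P B] .
  ultimately have "a $ k * det (submatrix M B B) < 0" "det (submatrix M B B) > 0" by linarith+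
  then show ?thesis unfolding a_def by (simp add: mult_less_0_iff)
qed



lemma lcp_empty:
  assumes P: "P_matrix M n" and q: "q \<in> carrier_vec n"
  shows "lcp_vec M n q {} = q"
proof -
  have "A_mat M n {} = 1\<^sub>m n" by (rule eq_matI, auto simp: A_mat_def)
  then have "A_mat M n {} *\<^sub>v q = q" using q by simp
  then show ?thesis using lcp_unique[OF P _ q] by auto
qed

lemma pivot_nonneg:
  assumes K: "K_matrix M n"
  shows "finite B \<Longrightarrow> B \<subseteq> {0..<n} \<Longrightarrow> \<forall>i<n. \<forall>j<n. i \<notin> B \<longrightarrow> j \<notin> B \<longrightarrow> j \<noteq> i \<longrightarrow>
     lcp_vec M n (- col M i) B $ j \<ge> 0"
proof (induction B rule: finite_induct)
  case empty
  have P: "P_matrix M n" using K by (simp add: K_matrix_def)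
  have M: "M \<in> carrier_mat n n" using P by (simp add: P_matrix_def)
  show ?case
  proof (intro allI impI)
    fix i j assume ij: "i < n" "j < n" "i \<notin> {}" "j \<notin> {}" "j \<noteq> i"
    have "lcp_vec M n (- col M i) {} = - col M i" using lcp_empty[OF P] M ij by simp
    then show "lcp_vec M n (- col M i) {} $ j \<ge> 0" using K ij M by (simp add: K_matrix_def)
  qed
next
  case (insert k B)
  have P: "P_matrix M n" using K by (simp add: K_matrix_def)
  have M: "M \<in> carrier_mat n n" using P by (simp add: P_matrix_def)
  have B: "B \<subseteq> {0..<n}" and k: "k < n" using insert.prems by auto
  note IH = insert.IH[OF B]
  show ?case
  proof (intro allI impI)
    fix i j assume ij: "i < n" "j < n" "i \<notin> insert k B" "j \<notin> insert k B" "j \<noteq> i"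
    have mc: "- col M i \<in> carrier_vec n" using M ij by simp
    define x where "x = lcp_vec M n (- col M i) B"
    define y where "y = lcp_vec M n (- col M i) (insert k B)"
    define c where "c = lcp_vec M n (- col M k) B"
    have r1: "x $ k = y $ k * c $ k" and r2: "x $ j = y $ j + y $ k * c $ j"
      using relation[OF P B k insert.hyps(2) mc] ij unfolding x_def y_def c_def by auto
    have ck: "c $ k < 0" using pivot_neg[OF P B k insert.hyps(2)] by (simp add: c_def)
    have xk: "x $ k \<ge> 0" using IH ij k insert.hyps(2) by (auto simp: x_def)
    have xj: "x $ j \<ge> 0" using IH ij by (auto simp: x_def)
    have cj: "c $ j \<ge> 0" using IH ij k insert.hyps(2) by (auto simp: c_def)
    have yk: "y $ k \<le> 0"
    proof (rule ccontr)
      assume "\<not> y $ k \<le> 0"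
      then have "y $ k * c $ k < 0" using ck by (simp add: mult_pos_neg)
      then show False using r1 xk by simp
    qed
    have "y $ k * c $ j \<le> 0" using yk cj by (simp add: mult_nonpos_nonneg)
    then show "lcp_vec M n (- col M i) (insert k B) $ j \<ge> 0" using r2 xj by (simp add: y_def)
  qed
qed

lemma pivot_nonneg':
  assumes K: "K_matrix M n" and B: "B \<subseteq> {0..<n}" and ij: "i < n" "j < n" "i \<notin> B" "j \<notin> B" "j \<noteq> i"
  shows "lcp_vec M n (- col M i) B $ j \<ge> 0"
  using pivot_nonneg[OF K finite_subset[OF B] B] ij by auto

lemma lu_s1:
  assumes K: "K_matrix M n" and B: "B \<subseteq> {0..<n}" and ij: "i < n" "j < n" "i \<notin> B" "j \<notin> B" "j \<noteq> i"
    and q: "q \<in> carrier_vec n"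
    and xi: "lcp_vec M n q B $ i < 0" and xj: "lcp_vec M n q B $ j < 0"
  shows "lcp_vec M n q (insert i B) $ j < 0"
proof -
  have P: "P_matrix M n" using K by (simp add: K_matrix_def)
  define x where "x = lcp_vec M n q B"
  define y where "y = lcp_vec M n q (insert i B)"
  define c where "c = lcp_vec M n (- col M i) B"
  have r1: "x $ i = y $ i * c $ i" and r2: "x $ j = y $ j + y $ i * c $ j"
    using relation[OF P B ij(1) ij(3) q] ij unfolding x_def y_def c_def by auto
  have ci: "c $ i < 0" using pivot_neg[OF P B ij(1) ij(3)] by (simp add: c_def)
  have cj: "c $ j \<ge> 0" using pivot_nonneg'[OF K B ij] by (simp add: c_def)
  have yi: "y $ i \<ge> 0"
  proof (rule ccontr)
    assume "\<not> y $ i \<ge> 0"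
    then have "y $ i * c $ i > 0" using ci by (simp add: mult_neg_neg)
    then show False using r1 xi by (simp add: x_def)
  qed
  have "y $ i * c $ j \<ge> 0" using yi cj by simp
  then show ?thesis using r2 xj by (simp add: x_def y_def)
qed

lemma lu_s2:
  assumes K: "K_matrix M n" and B: "B \<subseteq> {0..<n}" and ij: "i < n" "j < n" "i \<notin> B" "j \<notin> B" "j \<noteq> i"
    and q: "q \<in> carrier_vec n"
    and yi: "lcp_vec M n q (insert i B) $ i < 0" and xj: "lcp_vec M n q B $ j > 0"
  shows "lcp_vec M n q (insert i B) $ j > 0"
proof -
  have P: "P_matrix M n" using K by (simp add: K_matrix_def)
  define x where "x = lcp_vec M n q B"
  define y where "y = lcp_vec M n q (insert i B)"
  define c where "c = lcp_vec M n (- col M i) B"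
  have r2: "x $ j = y $ j + y $ i * c $ j"
    using relation[OF P B ij(1) ij(3) q] ij unfolding x_def y_def c_def by auto
  have cj: "c $ j \<ge> 0" using pivot_nonneg'[OF K B ij] by (simp add: c_def)
  have "y $ i * c $ j \<le> 0" using yi cj by (simp add: y_def mult_nonpos_nonneg)
  then show ?thesis using r2 xj by (simp add: x_def y_def)
qed

lemma lu_s3:
  assumes P: "P_matrix M n" and B: "B \<subseteq> {0..<n}" and i: "i < n" "i \<notin> B"
    and q: "q \<in> carrier_vec n"
  shows "lcp_vec M n q (insert i B) $ i < 0 \<longleftrightarrow> lcp_vec M n q B $ i > 0"
proof -
  define x where "x = lcp_vec M n q B"
  define y where "y = lcp_vec M n q (insert i B)"
  define c where "c = lcp_vec M n (- col M i) B"
  have r1: "x $ i = y $ i * c $ i"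
    using relation[OF P B i q] unfolding x_def y_def c_def by auto
  have ci: "c $ i < 0" using pivot_neg[OF P B i] by (simp add: c_def)
  have "y $ i < 0 \<longleftrightarrow> x $ i > 0" unfolding r1 using ci
    by (simp add: zero_less_mult_iff)
  then show ?thesis by (simp add: x_def y_def)
qed

lemma flip_ins: "i \<notin> u \<Longrightarrow> flip u i = insert i u"
  by (simp add: flip_def)

lemma flip_back: "i \<notin> u \<Longrightarrow> flip (insert i u) i = u"
  by (simp add: flip_def)

lemma K_imp_lu:
  assumes K: "K_matrix M n" and q: "q \<in> carrier_vec n"
  shows "locally_uniform n (lcp_arc M n q)"
  unfolding locally_uniform_def
proof (intro ballI allI impI conjI)
  have P: "P_matrix M n" using K by (simp add: K_matrix_def)
  fix u i j assume u: "u \<in> cube_vertices n" and ij0: "i < n" "j < n" "i \<noteq> j \<and> i \<notin> u \<and> j \<notin> u"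
  have U: "u \<subseteq> {0..<n}" using u by (simp add: cube_vertices_def)
  have ij: "i < n" "j < n" "i \<notin> u" "j \<notin> u" "j \<noteq> i" "i \<noteq> j" using ij0 by auto
  have Ui: "insert i u \<subseteq> {0..<n}" and Uj: "insert j u \<subseteq> {0..<n}" using U ij by auto
  have ji_u: "j \<notin> insert i u" "i \<notin> insert j u" using ij by auto
  have comm: "insert j (insert i u) = insert i (insert j u)" by auto
  note fl = flip_ins[OF ij(3)] flip_ins[OF ij(4)] flip_ins[OF ji_u(1)] flip_back[OF ij(3)]
  {
    assume a: "lcp_arc M n q u i \<and> lcp_arc M n q u j"
    show "lcp_arc M n q (flip u i) j"
      using lu_s1[OF K U ij(1,2,3,4,5) q] a by (simp add: fl lcp_arc_def)
    show "lcp_arc M n q (flip u j) i"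
      using lu_s1[OF K U ij(2,1,4,3,6) q] a by (simp add: fl lcp_arc_def)
  next
    assume a: "lcp_arc M n q (flip u i) i \<and> lcp_arc M n q (flip u j) j"
    have yi: "lcp_vec M n q (insert i u) $ i < 0" and yj: "lcp_vec M n q (insert j u) $ j < 0"
      using a by (simp_all add: fl lcp_arc_def)
    have xi: "lcp_vec M n q u $ i > 0" using lu_s3[OF P U ij(1,3) q] yi by simp
    have xj: "lcp_vec M n q u $ j > 0" using lu_s3[OF P U ij(2,4) q] yj by simp
    have y1: "lcp_vec M n q (insert i u) $ j > 0" using lu_s2[OF K U ij(1,2,3,4,5) q yi xj] .
    have y2: "lcp_vec M n q (insert j u) $ i > 0" using lu_s2[OF K U ij(2,1,4,3,6) q yj xi] .
    have z1: "lcp_vec M n q (insert j (insert i u)) $ j < 0"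
      using lu_s3[OF P Ui ij(2) ji_u(1) q] y1 by simp
    have z2: "lcp_vec M n q (insert i (insert j u)) $ i < 0"
      using lu_s3[OF P Uj ij(1) ji_u(2) q] y2 by simp
    show "lcp_arc M n q (flip (flip u i) j) j" using z1 by (simp add: fl lcp_arc_def)
    show "lcp_arc M n q (flip (flip u i) j) i" using z2 comm by (simp add: fl lcp_arc_def)
  }
qed



lemma row_inv_nonzero:
  assumes P: "P_matrix M n" and B: "B \<subseteq> {0..<n}" and k: "k < n"
  shows "\<exists>m<n. row (mat_inv (A_mat M n B)) k $ m \<noteq> 0"
proof (rule ccontr)
  assume "\<not> ?thesis"
  then have z: "\<forall>m<n. row (mat_inv (A_mat M n B)) k $ m = 0" by auto
  have I2: "mat_inv (A_mat M n B) * A_mat M n B = 1\<^sub>m n" and I3: "mat_inv (A_mat M n B) \<in> carrier_mat n n"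
    using A_inv[OF P B] by blast+
  have "(mat_inv (A_mat M n B) * A_mat M n B) $$ (k,k) = 1" using I2 k by simp
  moreover have "(mat_inv (A_mat M n B) * A_mat M n B) $$ (k,k)
      = row (mat_inv (A_mat M n B)) k \<bullet> col (A_mat M n B) k"
    using I3 k by (simp add: carrier_matD)
  moreover have "row (mat_inv (A_mat M n B)) k \<bullet> col (A_mat M n B) k = 0"
    unfolding scalar_prod_def using z by simp
  ultimately show False by simp
qed

lemma exists_nondeg:
  assumes P: "P_matrix M n" and ij: "i < n" "j < n" "i \<noteq> j" and c: "c > 0"
  shows "\<exists>q\<in>carrier_vec n. nondegenerate M n q \<and> q $ i < 0 \<and> q $ j < 0 \<and> q $ j - q $ i * c > 0"
proof -
  define qs where "qs = (\<lambda>m::nat. if m = i then -1 else if m = j then - c / 2 else (0::real))"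
  define qt where "qt = (\<lambda>t::real. vec n (\<lambda>m. qs m + t ^ Suc m))"
  define r where "r = (\<lambda>B k. row (mat_inv (A_mat M n B)) k)"
  define p where "p = (\<lambda>B k. [: \<Sum>m\<in>{0..<n}. r B k $ m * qs m :] + (\<Sum>m\<in>{0..<n}. monom (r B k $ m) (Suc m)))"
  have eval: "lcp_vec M n (qt t) B $ k = poly (p B k) t" if B: "B \<subseteq> {0..<n}" and k: "k < n" for B k t
  proof -
    have I3: "mat_inv (A_mat M n B) \<in> carrier_mat n n" using A_inv[OF P B] by blast
    have "lcp_vec M n (qt t) B $ k = r B k \<bullet> qt t"
      unfolding lcp_vec_def r_def using I3 k by (simp add: carrier_matD)
    also have "\<dots> = (\<Sum>m\<in>{0..<n}. r B k $ m * (qs m + t ^ Suc m))"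
      by (simp add: scalar_prod_def qt_def)
    also have "\<dots> = (\<Sum>m\<in>{0..<n}. r B k $ m * qs m) + (\<Sum>m\<in>{0..<n}. r B k $ m * t ^ Suc m)"
      by (simp add: distrib_left sum.distrib)
    also have "\<dots> = poly (p B k) t"
      by (simp add: p_def poly_sum poly_monom)
    finally show ?thesis .
  qed
  have pnz: "p B k \<noteq> 0" if B: "B \<subseteq> {0..<n}" and k: "k < n" for B k
  proof
    assume p0: "p B k = 0"
    obtain m where m: "m < n" "r B k $ m \<noteq> 0" using row_inv_nonzero[OF P B k] by (auto simp: r_def)
    have "coeff (p B k) (Suc m) = (\<Sum>m'\<in>{0..<n}. if Suc m' = Suc m then r B k $ m' else 0)"
      by (simp add: p_def coeff_sum)
    also have "\<dots> = r B k $ m" using m by simp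
    finally show False using p0 m by simp
  qed
  define Bad where "Bad = (\<Union>B\<in>Pow {0..<n}. \<Union>k\<in>{0..<n}. {t. poly (p B k) t = 0})"
  have finBad: "finite Bad" unfolding Bad_def
    using pnz poly_roots_finite by (intro finite_UN_I) auto
  define \<delta> where "\<delta> = min (1/2) (c/2)"
  have \<delta>: "0 < \<delta>" using c by (simp add: \<delta>_def)
  obtain t where t: "t \<in> {0<..<\<delta>}" "t \<notin> Bad"
    using infinite_Ioo[OF \<delta>] finBad by (meson finite_subset subsetI)
  have t0: "0 < t" "t < 1/2" "t < c/2" using t by (auto simp: \<delta>_def)
  have tp: "t ^ Suc m \<le> t" "0 < t ^ Suc m" for m
  proof -
    have "t ^ m \<le> 1" using t0 by (simp add: power_le_one)
    then show "t ^ Suc m \<le> t" using t0 by (simp add: mult_left_le)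
    show "0 < t ^ Suc m" using t0 by simp
  qed
  have qc: "qt t \<in> carrier_vec n" by (simp add: qt_def)
  have nd: "nondegenerate M n (qt t)"
    unfolding nondegenerate_def
  proof (intro allI impI)
    fix B k assume B: "B \<subseteq> {0..<n}" and k: "k < n"
    have "{t. poly (p B k) t = 0} \<subseteq> Bad" unfolding Bad_def using B k by (intro subsetI UN_I) auto
    then have "t \<notin> {t. poly (p B k) t = 0}" using t(2) by blast
    then show "lcp_vec M n (qt t) B $ k \<noteq> 0" using eval[OF B k] by simp
  qed
  have qi: "qt t $ i = -1 + t ^ Suc i" using ij by (simp add: qt_def qs_def)
  have qj: "qt t $ j = - c/2 + t ^ Suc j" using ij by (simp add: qt_def qs_def)
  have "qt t $ i < 0" using qi tp[of i] t0 by linarith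
  moreover have "qt t $ j < 0" using qj tp[of j] t0 by linarith
  moreover have "qt t $ j - qt t $ i * c > 0"
  proof -
    have "c * t ^ Suc i \<le> c * t" using tp[of i] c by (simp add: mult_left_mono)
    moreover have "c * t < c * (1/2)" using t0 c by (intro mult_strict_left_mono) auto
    moreover have "qt t $ i * c = c * t ^ Suc i - c" unfolding qi by (simp add: algebra_simps del: power_Suc)
    ultimately show ?thesis using qj tp[of j] by linarith
  qed
  ultimately show ?thesis using qc nd by blast
qed



theorem mainTheorem7:
  fixes M :: "real mat" and n :: nat
  assumes "P_matrix M n"
  shows "K_matrix M n \<longleftrightarrow>
    (\<forall>q \<in> carrier_vec n. nondegenerate M n q \<longrightarrow> locally_uniform n (lcp_arc M n q))"
proof
  assume "K_matrix M n"
  then show "\<forall>q \<in> carrier_vec n. nondegenerate M n q \<longrightarrow> locally_uniform n (lcp_arc M n q)"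
    using K_imp_lu by blast
next
  assume R: "\<forall>q \<in> carrier_vec n. nondegenerate M n q \<longrightarrow> locally_uniform n (lcp_arc M n q)"
  note P = assms
  have M: "M \<in> carrier_mat n n" using P by (simp add: P_matrix_def)
  have off: "M $$ (a, b) \<le> 0" if ab: "a < n" "b < n" "a \<noteq> b" for a b
  proof (rule ccontr)
    assume "\<not> M $$ (a, b) \<le> 0"
    then have mab: "M $$ (a, b) > 0" by simp
    have mc: "- col M b \<in> carrier_vec n" using M ab by simp
    have e: "lcp_vec M n (- col M b) {} = - col M b" using lcp_empty[OF P mc] .
    have "lcp_vec M n (- col M b) {} $ b < 0" using pivot_neg[OF P _ ab(2)] by simp
    then have d: "M $$ (b, b) > 0" using e ab M by simp
    define c where "c = M $$ (a, b) / M $$ (b, b)"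
    have c: "c > 0" using mab d by (simp add: c_def)
    obtain q where q: "q \<in> carrier_vec n" "nondegenerate M n q" "q $ b < 0" "q $ a < 0"
      "q $ a - q $ b * c > 0"
      using exists_nondeg[OF P ab(2) ab(1) ab(3)[symmetric] c] by blast
    have lu: "locally_uniform n (lcp_arc M n q)" using R q by blast
    have q0: "lcp_vec M n q {} = q" using lcp_empty[OF P q(1)] .
    have "lcp_arc M n q (flip {} b) a"
      using lu ab q q0 unfolding locally_uniform_def lcp_arc_def
      by (auto simp: cube_vertices_def)
    then have ya: "lcp_vec M n q {b} $ a < 0" by (simp add: lcp_arc_def flip_def)
    define y where "y = lcp_vec M n q {b}"
    have r1: "q $ b = y $ b * (- M $$ (b, b))" and r2: "q $ a = y $ a + y $ b * (- M $$ (a, b))"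
    proof -
      have R1: "lcp_vec M n q {} $ b = lcp_vec M n q (insert b {}) $ b * lcp_vec M n (- col M b) {} $ b"
        using relation(1)[of M n "{}" b q] P ab q(1) by simp
      have R2: "lcp_vec M n q {} $ a = lcp_vec M n q (insert b {}) $ a + lcp_vec M n q (insert b {}) $ b * lcp_vec M n (- col M b) {} $ a"
        using relation(2)[of M n "{}" b q a] P ab q(1) by simp
      show "q $ b = y $ b * (- M $$ (b, b))" using R1 e q0 ab M unfolding y_def by simp
      show "q $ a = y $ a + y $ b * (- M $$ (a, b))" using R2 e q0 ab M unfolding y_def by simp
    qed
    have "y $ b * M $$ (a, b) = - q $ b * c"
      using r1 d unfolding c_def by (simp add: field_simps)
    then have "y $ a = q $ a - q $ b * c" using r2 by (simp add: algebra_simps)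
    then show False using ya q(5) unfolding y_def by simp
  qed
  show "K_matrix M n" unfolding K_matrix_def using P off by blast
qed

end
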